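(* There is an algorithm that, given an integer $k\ge 1$ and a finite multiset $D$ of $n$ nonnegative integers, decides in $O(n\log n)$ time whether there exists a rooted $k$-ary tree whose multiset of node depths equals $D$.
   Context: A rooted $k$-ary tree is a rooted tree in which every node has at most $k$ children. The depth of a node is the number of edges on the path from it to the root; the multiset of depths has one entry per node. Running time is measured with arithmetic on the input integers taking unit time. *)

theory Defs
  imports Complex_Main "HOL-Library.Multiset"
begin

datatype tree = Node "tree list"

fun kary :: "nat \<Rightarrow> tree \<Rightarrow> bool" where
  "kary k (Node ts) = (length ts \<le> k \<and> (\<forall>t\<in>set ts. kary k t))"

fun depths :: "tree \<Rightarrow> nat multiset" where
  "depths (Node ts) = add_mset 0 (sum_list (map (\<lambda>t. image_mset Suc (depths t)) ts))"

datatype instr =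
    LoadConst nat int
  | Add nat nat nat
  | Sub nat nat nat
  | Mul nat nat nat
  | Load nat nat
  | Store nat nat
  | JumpLeq nat nat nat
  | Jump nat

type_synonym config = "nat \<times> (int \<Rightarrow> int)"

fun exec :: "instr \<Rightarrow> config \<Rightarrow> config" where
  "exec (LoadConst a c) (pc, m) = (Suc pc, m(int a := c))"
| "exec (Add a b c) (pc, m) = (Suc pc, m(int a := m (int b) + m (int c)))"
| "exec (Sub a b c) (pc, m) = (Suc pc, m(int a := m (int b) - m (int c)))"
| "exec (Mul a b c) (pc, m) = (Suc pc, m(int a := m (int b) * m (int c)))"
| "exec (Load a b) (pc, m) = (Suc pc, m(int a := m (m (int b))))"
| "exec (Store a b) (pc, m) = (Suc pc, m(m (int a) := m (int b)))"
| "exec (JumpLeq a b p) (pc, m) = (if m (int a) \<le> m (int b) then p else Suc pc, m)"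
| "exec (Jump p) (pc, m) = (p, m)"

definition halted :: "instr list \<Rightarrow> config \<Rightarrow> bool" where
  "halted P c \<longleftrightarrow> length P \<le> fst c"

definition step :: "instr list \<Rightarrow> config \<Rightarrow> config" where
  "step P c = (if halted P c then c else exec (P ! fst c) c)"

definition run :: "instr list \<Rightarrow> nat \<Rightarrow> config \<Rightarrow> config" where
  "run P t c = (step P ^^ t) c"

definition init :: "nat \<Rightarrow> nat list \<Rightarrow> config" where
  "init k ds = (0, \<lambda>a. if a = 0 then int k
                      else if a = 1 then int (length ds)
                      else if 2 \<le> a \<and> a < int (length ds) + 2 then int (ds ! nat (a - 2))
                      else 0)"

end

theory Submission
  imports Defs
begin


lemma count_sum_list_mset: "count (sum_list Ms) x = sum_list (map (\<lambda>M. count M x) Ms)"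
  by (induction Ms) auto

lemma count_Suc_image: "count (image_mset Suc M) (Suc d) = count M d"
  by (induction M) auto

lemma count_Suc_image0: "count (image_mset Suc M) 0 = 0"
  by (induction M) auto

lemma depths0: "count (depths T) 0 = 1"
  by (cases T) (simp add: count_sum_list_mset o_def count_Suc_image0)

lemma depthsSuc: "count (depths (Node ts)) (Suc d) = (\<Sum>t\<leftarrow>ts. count (depths t) d)"
  by (simp add: count_sum_list_mset o_def count_Suc_image)

lemma sum_list_le_mono: "(\<And>x. x \<in> set xs \<Longrightarrow> f x \<le> (g x::nat)) \<Longrightarrow> sum_list (map f xs) \<le> sum_list (map g xs)"
  by (induction xs) (auto intro: add_mono)

lemma kary_levels: "kary k T \<Longrightarrow> count (depths T) (Suc d) \<le> k * count (depths T) d"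
proof (induction T arbitrary: d)
  case (Node ts)
  show ?case
  proof (cases d)
    case 0
    have "(\<Sum>t\<leftarrow>ts. count (depths t) 0) = length ts"
      by (simp add: depths0 sum_list_triv)
    then have "count (depths (Node ts)) (Suc 0) = length ts" by (simp only: depthsSuc)
    then show ?thesis using Node.prems 0 depths0[of "Node ts"] by (simp del: depths.simps)
  next
    case (Suc e)
    have "(\<Sum>t\<leftarrow>ts. count (depths t) (Suc e)) \<le> (\<Sum>t\<leftarrow>ts. k * count (depths t) e)"
      using Node by (intro sum_list_le_mono) auto
    also have "\<dots> = k * (\<Sum>t\<leftarrow>ts. count (depths t) e)"
      by (simp add: sum_list_const_mult)
    finally show ?thesis using Suc by (simp only: depthsSuc)
  qed
qed

fun chunks :: "nat \<Rightarrow> nat \<Rightarrow> 'a list \<Rightarrow> 'a list list" where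
  "chunks k 0 xs = []"
| "chunks k (Suc m) xs = take k xs # chunks k m (drop k xs)"

lemma chunks_len: "length (chunks k m xs) = m"
  by (induction m arbitrary: xs) auto

lemma chunks_le: "g \<in> set (chunks k m xs) \<Longrightarrow> length g \<le> k"
  by (induction m arbitrary: xs) auto

lemma chunks_concat: "length xs \<le> k * m \<Longrightarrow> concat (chunks k m xs) = xs"
proof (induction m arbitrary: xs)
  case 0 then show ?case by simp
next
  case (Suc m)
  have "length (drop k xs) \<le> k * m" using Suc.prems by simp
  then show ?case using Suc.IH by simp
qed

definition fdepths :: "tree list \<Rightarrow> nat multiset" where
  "fdepths ts = sum_list (map depths ts)"

lemma fdepths0: "count (fdepths ts) 0 = length ts"
  by (induction ts) (auto simp: fdepths_def depths0)

lemma fdepths_concat: "fdepths (concat gs) = sum_list (map fdepths gs)"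
  by (induction gs) (auto simp: fdepths_def)

lemma image_Suc_sum_list: "image_mset f (sum_list Ms) = sum_list (map (image_mset f) Ms)"
  by (induction Ms) auto

lemma fdepths_Node: "fdepths (map Node gs) = replicate_mset (length gs) 0 + image_mset Suc (fdepths (concat gs))"
proof (induction gs)
  case Nil then show ?case by (simp add: fdepths_def)
next
  case (Cons g gs)
  have "depths (Node g) = add_mset 0 (image_mset Suc (fdepths g))"
    by (simp add: fdepths_def image_Suc_sum_list o_def)
  then show ?case using Cons by (simp add: fdepths_def)
qed

lemma split_mset: "M = replicate_mset (count M 0) 0 + image_mset Suc (image_mset (\<lambda>x. x - 1) (filter_mset (\<lambda>x. 0 < x) M))"
proof -
  have a: "image_mset Suc (image_mset (\<lambda>x. x - 1) (filter_mset (\<lambda>x. 0 < x) M)) = filter_mset (\<lambda>x. 0 < x) M"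
    by (induction M) auto
  have b: "filter_mset (\<lambda>x. x = 0) M = replicate_mset (count M 0) 0"
    by (induction M) auto
  have "M = filter_mset (\<lambda>x. x = 0) M + filter_mset (\<lambda>x. \<not> x = 0) M"
    by (rule multiset_partition)
  then show ?thesis unfolding a b by (simp add: neq0_conv)
qed

lemma forest_exists:
  "(\<forall>d. count M (Suc d) \<le> k * count M d) \<Longrightarrow> \<exists>ts. (\<forall>t\<in>set ts. kary k t) \<and> fdepths ts = M"
proof (induction "size M" arbitrary: M rule: less_induct)
  case less
  define M' where "M' = image_mset (\<lambda>x. x - 1) (filter_mset (\<lambda>x. 0 < x) M)"
  have spl: "M = replicate_mset (count M 0) 0 + image_mset Suc M'"
    unfolding M'_def by (rule split_mset)
  have cM': "count M' d = count M (Suc d)" for d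
  proof -
    have "count (replicate_mset (count M 0) 0 + image_mset Suc M') (Suc d) = count M' d"
      by (simp add: count_Suc_image)
    then show ?thesis using arg_cong[OF spl, of "\<lambda>N. count N (Suc d)"] by linarith
  qed
  show ?case
  proof (cases "count M 0 = 0")
    case True
    have "count M d = 0" for d
    proof (induction d)
      case 0 then show ?case using True by simp
    next
      case (Suc d) then show ?case using less.prems[rule_format, of d] by simp
    qed
    then have "M = {#}" by (simp add: multiset_eq_iff)
    then show ?thesis by (intro exI[of _ "[]"]) (simp add: fdepths_def)
  next
    case False
    have "size M = count M 0 + size M'" by (subst spl) simp
    then have "size M' < size M" using False by simp
    moreover have "\<forall>d. count M' (Suc d) \<le> k * count M' d" using less.prems cM' by simp
    ultimately obtain fs where fs: "\<forall>t\<in>set fs. kary k t" "fdepths fs = M'"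
      using less.hyps by blast
    have lfs: "length fs = count M 1" using fdepths0[of fs] fs cM'[of 0] by simp
    define gs where "gs = chunks k (count M 0) fs"
    have "length fs \<le> k * count M 0" using lfs less.prems[rule_format, of 0] by simp
    then have cc: "concat gs = fs" unfolding gs_def by (rule chunks_concat)
    have "fdepths (map Node gs) = M"
      using fdepths_Node[of gs] cc fs spl by (simp add: gs_def chunks_len)
    moreover have "\<forall>t\<in>set (map Node gs). kary k t"
    proof
      fix t assume "t \<in> set (map Node gs)"
      then obtain g where g: "g \<in> set gs" "t = Node g" by auto
      have "length g \<le> k" using g chunks_le unfolding gs_def by blast
      moreover have "set g \<subseteq> set fs" using g(1) cc by auto
      ultimately show "kary k t" using g fs(1) by auto
    qed
    ultimately show ?thesis by blast
  qed
qed

lemma tree_char: "(\<exists>T. kary k T \<and> depths T = M) \<longleftrightarrow> count M 0 = 1 \<and> (\<forall>d. count M (Suc d) \<le> k * count M d)"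
proof
  assume "\<exists>T. kary k T \<and> depths T = M"
  then show "count M 0 = 1 \<and> (\<forall>d. count M (Suc d) \<le> k * count M d)"
    using depths0 kary_levels by blast
next
  assume h: "count M 0 = 1 \<and> (\<forall>d. count M (Suc d) \<le> k * count M d)"
  then obtain ts where ts: "\<forall>t\<in>set ts. kary k t" "fdepths ts = M" using forest_exists by blast
  then have "length ts = 1" using fdepths0[of ts] h by simp
  then obtain T where "ts = [T]" by (cases ts) auto
  then show "\<exists>T. kary k T \<and> depths T = M" using ts by (auto simp: fdepths_def)
qed

lemma cond_bound:
  assumes "\<forall>d. count M (Suc d) \<le> k * count M d" "x \<in># M"
  shows "x < size M"
proof -
  have "\<forall>y\<le>x. y \<in># M"
  proof (intro allI impI)
    fix y assume "y \<le> x"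
    then show "y \<in># M"
    proof (induction "x - y" arbitrary: y)
      case 0 then have "y = x" by simp then show ?case using assms by simp
    next
      case (Suc j)
      then have "Suc y \<in># M" by simp
      then have "0 < count M (Suc y)" by simp
      then have "0 < count M y" using assms(1)[rule_format, of y] by (metis le_zero_eq mult_0_right not_gr0)
      then show ?case by simp
    qed
  qed
  then have "{0..x} \<subseteq> set_mset M" by auto
  then have "card {0..x} \<le> card (set_mset M)" by (intro card_mono) auto
  also have "\<dots> \<le> size M" by (induction M) (auto simp: card_insert_if)
  finally show ?thesis by simp
qed



lemma run_0[simp]: "run P 0 c = c" by (simp add: run_def)
lemma run_Suc: "run P (Suc t) c = run P t (step P c)"
  by (simp only: run_def funpow_Suc_right o_apply)
lemma run_add: "run P (a + b) c = run P b (run P a c)"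
  by (simp only: run_def add.commute[of a b] funpow_add o_apply)

definition Prog :: "instr list" where
  "Prog = [Add 1 1 0,
    Sub 0 0 1,
    Sub 0 0 1,
    Store 0 1,
    LoadConst 1 1,
    Sub 1 0 1,
    Store 1 2,
    LoadConst 1 2,
    Sub 1 0 1,
    Store 1 3,
    LoadConst 1 3,
    Sub 1 0 1,
    Store 1 4,
    LoadConst 1 4,
    Sub 1 0 1,
    Store 1 5,
    LoadConst 1 5,
    Sub 1 0 1,
    Store 1 6,
    LoadConst 1 6,
    Sub 1 0 1,
    Store 1 7,
    Load 4 0,
    LoadConst 5 0,
    Sub 3 5 0,
    Sub 3 3 4,
    Sub 4 4 3,
    LoadConst 1 8,
    Sub 1 0 1,
    Store 1 4,
    LoadConst 4 6,
    JumpLeq 4 3 33,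
    Add 4 3 5,
    Sub 4 0 4,
    LoadConst 1 7,
    Sub 1 0 1,
    Store 1 4,
    LoadConst 5 1,
    LoadConst 6 8,
    Add 6 6 3,
    Add 7 6 3,
    LoadConst 1 8,
    LoadConst 2 2,
    Add 2 2 3,
    JumpLeq 2 1 53,
    Load 3 1,
    Add 3 3 6,
    JumpLeq 7 3 80,
    Load 4 3,
    Add 4 4 5,
    Store 3 4,
    Add 1 1 5,
    Jump 44,
    JumpLeq 2 5 60,
    LoadConst 1 7,
    Sub 1 0 1,
    Load 1 1,
    LoadConst 3 0,
    Add 2 0 3,
    Jump 44,
    LoadConst 2 8,
    Sub 2 0 2,
    Load 2 2,
    Load 3 6,
    JumpLeq 3 5 66,
    Jump 80,
    JumpLeq 5 3 68,
    Jump 80,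
    Add 1 6 5,
    JumpLeq 7 1 78,
    Load 3 1,
    Sub 4 1 5,
    Load 4 4,
    Mul 4 4 2,
    JumpLeq 3 4 76,
    Jump 80,
    Add 1 1 5,
    Jump 69,
    LoadConst 0 1,
    Jump 81,
    LoadConst 0 0]"

lemma len_Prog: "length Prog = 81" by (simp add: Prog_def)

lemma st0: "step Prog (0, m) = (1, m(1 := m 1 + m 0))"
  by (simp add: step_def halted_def len_Prog, simp add: Prog_def)

lemma st1: "step Prog (1, m) = (2, m(0 := m 0 - m 1))"
  by (simp add: step_def halted_def len_Prog, simp add: Prog_def)

lemma st2: "step Prog (2, m) = (3, m(0 := m 0 - m 1))"
  by (simp add: step_def halted_def len_Prog, simp add: Prog_def)

lemma st3: "step Prog (3, m) = (4, m(m 0 := m 1))"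
  by (simp add: step_def halted_def len_Prog, simp add: Prog_def)

lemma st4: "step Prog (4, m) = (5, m(1 := 1))"
  by (simp add: step_def halted_def len_Prog, simp add: Prog_def)

lemma st5: "step Prog (5, m) = (6, m(1 := m 0 - m 1))"
  by (simp add: step_def halted_def len_Prog, simp add: Prog_def)

lemma st6: "step Prog (6, m) = (7, m(m 1 := m 2))"
  by (simp add: step_def halted_def len_Prog, simp add: Prog_def)

lemma st7: "step Prog (7, m) = (8, m(1 := 2))"
  by (simp add: step_def halted_def len_Prog, simp add: Prog_def)

lemma st8: "step Prog (8, m) = (9, m(1 := m 0 - m 1))"
  by (simp add: step_def halted_def len_Prog, simp add: Prog_def)

lemma st9: "step Prog (9, m) = (10, m(m 1 := m 3))"
  by (simp add: step_def halted_def len_Prog, simp add: Prog_def)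

lemma st10: "step Prog (10, m) = (11, m(1 := 3))"
  by (simp add: step_def halted_def len_Prog, simp add: Prog_def)

lemma st11: "step Prog (11, m) = (12, m(1 := m 0 - m 1))"
  by (simp add: step_def halted_def len_Prog, simp add: Prog_def)

lemma st12: "step Prog (12, m) = (13, m(m 1 := m 4))"
  by (simp add: step_def halted_def len_Prog, simp add: Prog_def)

lemma st13: "step Prog (13, m) = (14, m(1 := 4))"
  by (simp add: step_def halted_def len_Prog, simp add: Prog_def)

lemma st14: "step Prog (14, m) = (15, m(1 := m 0 - m 1))"
  by (simp add: step_def halted_def len_Prog, simp add: Prog_def)

lemma st15: "step Prog (15, m) = (16, m(m 1 := m 5))"
  by (simp add: step_def halted_def len_Prog, simp add: Prog_def)

lemma st16: "step Prog (16, m) = (17, m(1 := 5))"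
  by (simp add: step_def halted_def len_Prog, simp add: Prog_def)

lemma st17: "step Prog (17, m) = (18, m(1 := m 0 - m 1))"
  by (simp add: step_def halted_def len_Prog, simp add: Prog_def)

lemma st18: "step Prog (18, m) = (19, m(m 1 := m 6))"
  by (simp add: step_def halted_def len_Prog, simp add: Prog_def)

lemma st19: "step Prog (19, m) = (20, m(1 := 6))"
  by (simp add: step_def halted_def len_Prog, simp add: Prog_def)

lemma st20: "step Prog (20, m) = (21, m(1 := m 0 - m 1))"
  by (simp add: step_def halted_def len_Prog, simp add: Prog_def)

lemma st21: "step Prog (21, m) = (22, m(m 1 := m 7))"
  by (simp add: step_def halted_def len_Prog, simp add: Prog_def)

lemma st22: "step Prog (22, m) = (23, m(4 := m (m 0)))"
  by (simp add: step_def halted_def len_Prog, simp add: Prog_def)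

lemma st23: "step Prog (23, m) = (24, m(5 := 0))"
  by (simp add: step_def halted_def len_Prog, simp add: Prog_def)

lemma st24: "step Prog (24, m) = (25, m(3 := m 5 - m 0))"
  by (simp add: step_def halted_def len_Prog, simp add: Prog_def)

lemma st25: "step Prog (25, m) = (26, m(3 := m 3 - m 4))"
  by (simp add: step_def halted_def len_Prog, simp add: Prog_def)

lemma st26: "step Prog (26, m) = (27, m(4 := m 4 - m 3))"
  by (simp add: step_def halted_def len_Prog, simp add: Prog_def)

lemma st27: "step Prog (27, m) = (28, m(1 := 8))"
  by (simp add: step_def halted_def len_Prog, simp add: Prog_def)

lemma st28: "step Prog (28, m) = (29, m(1 := m 0 - m 1))"
  by (simp add: step_def halted_def len_Prog, simp add: Prog_def)

lemma st29: "step Prog (29, m) = (30, m(m 1 := m 4))"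
  by (simp add: step_def halted_def len_Prog, simp add: Prog_def)

lemma st30: "step Prog (30, m) = (31, m(4 := 6))"
  by (simp add: step_def halted_def len_Prog, simp add: Prog_def)

lemma st31: "step Prog (31, m) = (if m 4 \<le> m 3 then 33 else 32, m)"
  by (simp add: step_def halted_def len_Prog, simp add: Prog_def)

lemma st32: "step Prog (32, m) = (33, m(4 := m 3 + m 5))"
  by (simp add: step_def halted_def len_Prog, simp add: Prog_def)

lemma st33: "step Prog (33, m) = (34, m(4 := m 0 - m 4))"
  by (simp add: step_def halted_def len_Prog, simp add: Prog_def)

lemma st34: "step Prog (34, m) = (35, m(1 := 7))"
  by (simp add: step_def halted_def len_Prog, simp add: Prog_def)

lemma st35: "step Prog (35, m) = (36, m(1 := m 0 - m 1))"
  by (simp add: step_def halted_def len_Prog, simp add: Prog_def)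

lemma st36: "step Prog (36, m) = (37, m(m 1 := m 4))"
  by (simp add: step_def halted_def len_Prog, simp add: Prog_def)

lemma st37: "step Prog (37, m) = (38, m(5 := 1))"
  by (simp add: step_def halted_def len_Prog, simp add: Prog_def)

lemma st38: "step Prog (38, m) = (39, m(6 := 8))"
  by (simp add: step_def halted_def len_Prog, simp add: Prog_def)

lemma st39: "step Prog (39, m) = (40, m(6 := m 6 + m 3))"
  by (simp add: step_def halted_def len_Prog, simp add: Prog_def)

lemma st40: "step Prog (40, m) = (41, m(7 := m 6 + m 3))"
  by (simp add: step_def halted_def len_Prog, simp add: Prog_def)

lemma st41: "step Prog (41, m) = (42, m(1 := 8))"
  by (simp add: step_def halted_def len_Prog, simp add: Prog_def)

lemma st42: "step Prog (42, m) = (43, m(2 := 2))"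
  by (simp add: step_def halted_def len_Prog, simp add: Prog_def)

lemma st43: "step Prog (43, m) = (44, m(2 := m 2 + m 3))"
  by (simp add: step_def halted_def len_Prog, simp add: Prog_def)

lemma st44: "step Prog (44, m) = (if m 2 \<le> m 1 then 53 else 45, m)"
  by (simp add: step_def halted_def len_Prog, simp add: Prog_def)

lemma st45: "step Prog (45, m) = (46, m(3 := m (m 1)))"
  by (simp add: step_def halted_def len_Prog, simp add: Prog_def)

lemma st46: "step Prog (46, m) = (47, m(3 := m 3 + m 6))"
  by (simp add: step_def halted_def len_Prog, simp add: Prog_def)

lemma st47: "step Prog (47, m) = (if m 7 \<le> m 3 then 80 else 48, m)"
  by (simp add: step_def halted_def len_Prog, simp add: Prog_def)

lemma st48: "step Prog (48, m) = (49, m(4 := m (m 3)))"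
  by (simp add: step_def halted_def len_Prog, simp add: Prog_def)

lemma st49: "step Prog (49, m) = (50, m(4 := m 4 + m 5))"
  by (simp add: step_def halted_def len_Prog, simp add: Prog_def)

lemma st50: "step Prog (50, m) = (51, m(m 3 := m 4))"
  by (simp add: step_def halted_def len_Prog, simp add: Prog_def)

lemma st51: "step Prog (51, m) = (52, m(1 := m 1 + m 5))"
  by (simp add: step_def halted_def len_Prog, simp add: Prog_def)

lemma st52: "step Prog (52, m) = (44, m)"
  by (simp add: step_def halted_def len_Prog, simp add: Prog_def)

lemma st53: "step Prog (53, m) = (if m 2 \<le> m 5 then 60 else 54, m)"
  by (simp add: step_def halted_def len_Prog, simp add: Prog_def)

lemma st54: "step Prog (54, m) = (55, m(1 := 7))"
  by (simp add: step_def halted_def len_Prog, simp add: Prog_def)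

lemma st55: "step Prog (55, m) = (56, m(1 := m 0 - m 1))"
  by (simp add: step_def halted_def len_Prog, simp add: Prog_def)

lemma st56: "step Prog (56, m) = (57, m(1 := m (m 1)))"
  by (simp add: step_def halted_def len_Prog, simp add: Prog_def)

lemma st57: "step Prog (57, m) = (58, m(3 := 0))"
  by (simp add: step_def halted_def len_Prog, simp add: Prog_def)

lemma st58: "step Prog (58, m) = (59, m(2 := m 0 + m 3))"
  by (simp add: step_def halted_def len_Prog, simp add: Prog_def)

lemma st59: "step Prog (59, m) = (44, m)"
  by (simp add: step_def halted_def len_Prog, simp add: Prog_def)

lemma st60: "step Prog (60, m) = (61, m(2 := 8))"
  by (simp add: step_def halted_def len_Prog, simp add: Prog_def)

lemma st61: "step Prog (61, m) = (62, m(2 := m 0 - m 2))"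
  by (simp add: step_def halted_def len_Prog, simp add: Prog_def)

lemma st62: "step Prog (62, m) = (63, m(2 := m (m 2)))"
  by (simp add: step_def halted_def len_Prog, simp add: Prog_def)

lemma st63: "step Prog (63, m) = (64, m(3 := m (m 6)))"
  by (simp add: step_def halted_def len_Prog, simp add: Prog_def)

lemma st64: "step Prog (64, m) = (if m 3 \<le> m 5 then 66 else 65, m)"
  by (simp add: step_def halted_def len_Prog, simp add: Prog_def)

lemma st65: "step Prog (65, m) = (80, m)"
  by (simp add: step_def halted_def len_Prog, simp add: Prog_def)

lemma st66: "step Prog (66, m) = (if m 5 \<le> m 3 then 68 else 67, m)"
  by (simp add: step_def halted_def len_Prog, simp add: Prog_def)

lemma st67: "step Prog (67, m) = (80, m)"
  by (simp add: step_def halted_def len_Prog, simp add: Prog_def)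

lemma st68: "step Prog (68, m) = (69, m(1 := m 6 + m 5))"
  by (simp add: step_def halted_def len_Prog, simp add: Prog_def)

lemma st69: "step Prog (69, m) = (if m 7 \<le> m 1 then 78 else 70, m)"
  by (simp add: step_def halted_def len_Prog, simp add: Prog_def)

lemma st70: "step Prog (70, m) = (71, m(3 := m (m 1)))"
  by (simp add: step_def halted_def len_Prog, simp add: Prog_def)

lemma st71: "step Prog (71, m) = (72, m(4 := m 1 - m 5))"
  by (simp add: step_def halted_def len_Prog, simp add: Prog_def)

lemma st72: "step Prog (72, m) = (73, m(4 := m (m 4)))"
  by (simp add: step_def halted_def len_Prog, simp add: Prog_def)

lemma st73: "step Prog (73, m) = (74, m(4 := m 4 * m 2))"
  by (simp add: step_def halted_def len_Prog, simp add: Prog_def)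

lemma st74: "step Prog (74, m) = (if m 3 \<le> m 4 then 76 else 75, m)"
  by (simp add: step_def halted_def len_Prog, simp add: Prog_def)

lemma st75: "step Prog (75, m) = (80, m)"
  by (simp add: step_def halted_def len_Prog, simp add: Prog_def)

lemma st76: "step Prog (76, m) = (77, m(1 := m 1 + m 5))"
  by (simp add: step_def halted_def len_Prog, simp add: Prog_def)

lemma st77: "step Prog (77, m) = (69, m)"
  by (simp add: step_def halted_def len_Prog, simp add: Prog_def)

lemma st78: "step Prog (78, m) = (79, m(0 := 1))"
  by (simp add: step_def halted_def len_Prog, simp add: Prog_def)

lemma st79: "step Prog (79, m) = (81, m)"
  by (simp add: step_def halted_def len_Prog, simp add: Prog_def)

lemma st80: "step Prog (80, m) = (81, m(0 := 0))"
  by (simp add: step_def halted_def len_Prog, simp add: Prog_def)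

lemmas st_all = st0 st1 st2 st3 st4 st5 st6 st7 st8 st9 st10 st11 st12 st13 st14 st15 st16 st17 st18 st19 st20 st21 st22 st23 st24 st25 st26 st27 st28 st29 st30 st31 st32 st33 st34 st35 st36 st37 st38 st39 st40 st41 st42 st43 st44 st45 st46 st47 st48 st49 st50 st51 st52 st53 st54 st55 st56 st57 st58 st59 st60 st61 st62 st63 st64 st65 st66 st67 st68 st69 st70 st71 st72 st73 st74 st75 st76 st77 st78 st79 st80

lemma run_numeral: "run P (numeral n) c = run P (pred_numeral n) (step P c)"
  by (simp add: numeral_eq_Suc run_Suc)

lemma st81: "step Prog (81, m) = (81, m)"
  by (simp add: step_def halted_def len_Prog)

lemma run_halt: "run Prog t (81, m) = (81, m)"
  by (induction t) (simp_all add: run_Suc st81)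


lemma card_split:
  assumes "p < h"
  shows "card {i \<in> {p..<h::int}. f i = c} = (if f p = c then 1 else 0) + card {i \<in> {p+1..<h}. f i = c}"
proof -
  have ins: "{p..<h} = insert p {p+1..<h}" using assms by (auto; arith)
  have e: "{i \<in> {p..<h}. f i = c} = (if f p = c then {p} else {}) \<union> {i \<in> {p+1..<h}. f i = c}"
    by (subst ins) auto
  have fin: "finite {i \<in> {p+1..<h}. f i = c}" by (rule finite_subset[of _ "{p+1..<h}"]) auto
  have nin: "p \<notin> {i \<in> {p+1..<h}. f i = c}" by simp
  show ?thesis
  proof (cases "f p = c")
    case True
    then show ?thesis unfolding e using card_insert_disjoint[OF fin nin] by simp
  next
    case False
    then show ?thesis unfolding e by simp
  qed
qed

lemma loopC_aux:
  fixes m :: "int \<Rightarrow> int" and p h b N :: int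
  assumes "nat (h - p) = len"
    "m 1 = p" "m 2 = h" "m 5 = 1" "m 6 = b" "m 7 = b + N" "8 \<le> b" "0 \<le> N"
    "\<forall>a\<in>{p..<h}. 0 \<le> m a"
    "\<forall>a\<in>{p..<h}. (a < 0 \<or> 8 \<le> a) \<and> (a < b \<or> b + N \<le> a)"
  shows "\<exists>t \<le> 9 * nat (h - p) + 1. if (\<forall>a\<in>{p..<h}. m a < N) then
      (fst (run Prog t (44,m)) = 53
       \<and> (\<forall>a. a \<notin> {1,3,4} \<longrightarrow> \<not>(b \<le> a \<and> a < b+N) \<longrightarrow> snd (run Prog t (44,m)) a = m a)
       \<and> (\<forall>a. b \<le> a \<and> a < b+N \<longrightarrow> snd (run Prog t (44,m)) a = m a + int (card {i\<in>{p..<h}. m i = a - b})))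
    else fst (run Prog t (44, m)) = 80"
  using assms
proof (induction len arbitrary: m p)
  case 0
  then have hp: "h \<le> p" by simp
  have "run Prog 1 (44, m) = (53, m)" using 0 hp by (simp add: run_Suc st_all)
  moreover have "{p..<h} = {}" using hp by simp
  ultimately show ?case by (intro exI[of _ 1]) simp
next
  case (Suc len)
  then have hp: "p < h" by simp
  define v where "v = m p"
  have v0: "0 \<le> v" using Suc.prems hp unfolding v_def by auto
  have pd: "(p < 0 \<or> 8 \<le> p) \<and> (p < b \<or> b + N \<le> p)" using Suc.prems hp by auto
  show ?case
  proof (cases "N \<le> v")
    case True
    have "run Prog 4 (44, m) = (80, m(3 := v + b))"
      using Suc.prems hp True by (simp add: run_numeral run_Suc st_all v_def)
    moreover have "\<not> (\<forall>a\<in>{p..<h}. m a < N)" using hp True unfolding v_def by (meson atLeastLessThan_iff not_le order_refl)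
    ultimately show ?thesis using hp by (intro exI[of _ 4]) simp
  next
    case False
    define x where "x = v + b"
    have x8: "8 \<le> x" "b \<le> x" "x < b + N" using v0 False Suc.prems unfolding x_def by auto
    define m' where "m' = m(3 := x, 4 := m x + 1, x := m x + 1, 1 := p + 1)"
    have r9: "run Prog 9 (44, m) = (44, m')"
      using Suc.prems hp False x8 by (simp add: run_numeral run_Suc st_all v_def x_def m'_def)
    have eq: "\<forall>a\<in>{p+1..<h}. m' a = m a"
    proof
      fix a assume a: "a \<in> {p+1..<h}"
      then have "(a < 0 \<or> 8 \<le> a) \<and> (a < b \<or> b + N \<le> a)" using Suc.prems(10) by auto
      then have "a \<noteq> 1" "a \<noteq> 3" "a \<noteq> 4" "a \<noteq> x" using x8 by auto
      then show "m' a = m a" unfolding m'_def by simp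
    qed
    have IH: "\<exists>t \<le> 9 * nat (h - (p+1)) + 1. if (\<forall>a\<in>{p+1..<h}. m' a < N) then
      (fst (run Prog t (44,m')) = 53
       \<and> (\<forall>a. a \<notin> {1,3,4} \<longrightarrow> \<not>(b \<le> a \<and> a < b+N) \<longrightarrow> snd (run Prog t (44,m')) a = m' a)
       \<and> (\<forall>a. b \<le> a \<and> a < b+N \<longrightarrow> snd (run Prog t (44,m')) a = m' a + int (card {i\<in>{p+1..<h}. m' i = a - b})))
      else fst (run Prog t (44, m')) = 80"
    proof (rule Suc.IH)
      show "nat (h - (p + 1)) = len" using Suc.prems by simp
      show "m' 1 = p + 1" "m' 2 = h" "m' 5 = 1" "m' 6 = b" "m' 7 = b + N"
        using Suc.prems x8 unfolding m'_def by auto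
      show "8 \<le> b" "0 \<le> N" using Suc.prems by auto
      show "\<forall>a\<in>{p+1..<h}. 0 \<le> m' a" using eq Suc.prems by auto
      show "\<forall>a\<in>{p+1..<h}. (a < 0 \<or> 8 \<le> a) \<and> (a < b \<or> b + N \<le> a)" using Suc.prems by auto
    qed
    have ceq: "{i\<in>{p+1..<h}. m' i = c} = {i\<in>{p+1..<h}. m i = c}" for c using eq by auto
    have condeq: "(\<forall>a\<in>{p..<h}. m a < N) \<longleftrightarrow> (\<forall>a\<in>{p+1..<h}. m' a < N)"
      using eq False hp v_def by (auto simp: not_le)
    from IH obtain t where t: "t \<le> 9 * nat (h - (p+1)) + 1" and
      tt: "if (\<forall>a\<in>{p+1..<h}. m' a < N) then
      (fst (run Prog t (44,m')) = 53
       \<and> (\<forall>a. a \<notin> {1,3,4} \<longrightarrow> \<not>(b \<le> a \<and> a < b+N) \<longrightarrow> snd (run Prog t (44,m')) a = m' a)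
       \<and> (\<forall>a. b \<le> a \<and> a < b+N \<longrightarrow> snd (run Prog t (44,m')) a = m' a + int (card {i\<in>{p+1..<h}. m' i = a - b})))
      else fst (run Prog t (44, m')) = 80" by blast
    have R: "run Prog (9 + t) (44, m) = run Prog t (44, m')" by (simp add: run_add r9)
    have tb: "9 + t \<le> 9 * nat (h - p) + 1" using t hp by simp
    show ?thesis
    proof (intro exI[of _ "9 + t"] conjI tb)
      show "if (\<forall>a\<in>{p..<h}. m a < N) then
      (fst (run Prog (9+t) (44,m)) = 53
       \<and> (\<forall>a. a \<notin> {1,3,4} \<longrightarrow> \<not>(b \<le> a \<and> a < b+N) \<longrightarrow> snd (run Prog (9+t) (44,m)) a = m a)
       \<and> (\<forall>a. b \<le> a \<and> a < b+N \<longrightarrow> snd (run Prog (9+t) (44,m)) a = m a + int (card {i\<in>{p..<h}. m i = a - b})))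
      else fst (run Prog (9+t) (44, m)) = 80"
      proof (cases "\<forall>a\<in>{p+1..<h}. m' a < N")
        case True
        have A: "\<forall>a. a \<notin> {1,3,4} \<longrightarrow> \<not>(b \<le> a \<and> a < b+N) \<longrightarrow> snd (run Prog (9+t) (44,m)) a = m a"
        proof (intro allI impI)
          fix a assume a: "a \<notin> {1,3,4}" "\<not>(b \<le> a \<and> a < b+N)"
          then have "a \<noteq> x" using x8 by auto
          then show "snd (run Prog (9+t) (44,m)) a = m a" using a tt True R unfolding m'_def by auto
        qed
        have B: "\<forall>a. b \<le> a \<and> a < b+N \<longrightarrow> snd (run Prog (9+t) (44,m)) a = m a + int (card {i\<in>{p..<h}. m i = a - b})"
        proof (intro allI impI)
          fix a assume a: "b \<le> a \<and> a < b+N"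
          have "snd (run Prog (9+t) (44,m)) a = m' a + int (card {i\<in>{p+1..<h}. m i = a - b})"
            using a tt True R ceq by auto
          moreover have "m' a = m a + (if a = x then 1 else 0)" using a Suc.prems unfolding m'_def by auto
          moreover have "(a = x) = (m p = a - b)" unfolding x_def v_def by auto
          ultimately show "snd (run Prog (9+t) (44,m)) a = m a + int (card {i\<in>{p..<h}. m i = a - b})"
            using card_split[OF hp, of m "a - b"] by auto
        qed
        show ?thesis using A B True condeq tt R by auto
      next
        case False
        then show ?thesis using condeq tt R by auto
      qed
    qed
  qed
qed


lemma loop2_aux:
  fixes m :: "int \<Rightarrow> int" and p l K :: int
  assumes "nat (l - p) = len" "m 1 = p" "m 7 = l" "m 5 = 1" "m 2 = K" "\<forall>a\<in>{p-1..<l}. 8 \<le> a"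
  shows "\<exists>t \<le> 9 * nat (l - p) + 1. fst (run Prog t (69,m)) = (if \<forall>a\<in>{p..<l}. m a \<le> m (a-1) * K then 78 else 80)"
  using assms
proof (induction len arbitrary: m p)
  case 0
  then have hp: "l \<le> p" by simp
  have "run Prog 1 (69, m) = (78, m)" using 0 hp by (simp add: run_Suc st_all)
  moreover have "{p..<l} = {}" using hp by simp
  ultimately show ?case by (intro exI[of _ 1]) simp
next
  case (Suc len)
  then have hp: "p < l" by simp
  have "p - 1 \<in> {p-1..<l}" using hp by simp
  then have p8: "8 \<le> p - 1" using Suc.prems(6) by blast
  show ?case
  proof (cases "m p \<le> m (p-1) * K")
    case False
    have "run Prog 7 (69, m) = (80, m(3 := m p, 4 := m (p-1) * K))"
      using Suc.prems hp False p8 by (simp add: run_numeral run_Suc st_all)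
    moreover have "\<not> (\<forall>a\<in>{p..<l}. m a \<le> m (a-1) * K)" using hp False
      by (meson atLeastLessThan_iff order_refl)
    ultimately show ?thesis using hp by (intro exI[of _ 7]) simp
  next
    case True
    define m' where "m' = m(3 := m p, 4 := m (p-1) * K, 1 := p + 1)"
    have r8: "run Prog 8 (69, m) = (69, m')"
      using Suc.prems hp True p8 by (simp add: run_numeral run_Suc st_all m'_def)
    have eq: "\<forall>a\<in>{p..<l}. m' a = m a"
    proof
      fix a assume a: "a \<in> {p..<l}"
      then have "8 \<le> a" using Suc.prems(6) by auto
      then show "m' a = m a" unfolding m'_def by simp
    qed
    have IH: "\<exists>t \<le> 9 * nat (l - (p+1)) + 1. fst (run Prog t (69,m')) = (if \<forall>a\<in>{p+1..<l}. m' a \<le> m' (a-1) * K then 78 else 80)"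
    proof (rule Suc.IH)
      show "nat (l - (p + 1)) = len" using Suc.prems by simp
      show "m' 1 = p + 1" "m' 7 = l" "m' 5 = 1" "m' 2 = K" using Suc.prems unfolding m'_def by auto
      show "\<forall>a\<in>{p + 1 - 1..<l}. 8 \<le> a" using Suc.prems(6) by auto
    qed
    have condeq: "(\<forall>a\<in>{p..<l}. m a \<le> m (a-1) * K) \<longleftrightarrow> (\<forall>a\<in>{p+1..<l}. m' a \<le> m' (a-1) * K)"
    proof -
      have "\<forall>a\<in>{p+1..<l}. m' a = m a \<and> m' (a-1) = m (a-1)" using eq by auto
      moreover have "{p..<l} = insert p {p+1..<l}" using hp by (auto; arith)
      ultimately show ?thesis using True by auto
    qed
    from IH obtain t where t: "t \<le> 9 * nat (l - (p+1)) + 1" and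
      tt: "fst (run Prog t (69,m')) = (if \<forall>a\<in>{p+1..<l}. m' a \<le> m' (a-1) * K then 78 else 80)" by blast
    have R: "run Prog (8 + t) (69, m) = run Prog t (69, m')" by (simp add: run_add r8)
    show ?thesis using t hp tt R condeq by (intro exI[of _ "8 + t"]) auto
  qed
qed


lemma setupB1:
  fixes m :: "int \<Rightarrow> int" and q n k :: int
  assumes "m 0 = q" "q = -2*n - k" "m q = n + k" "0 \<le> n" "1 \<le> k" "6 \<le> n"
  shows "fst (run Prog 39 (4, m)) = 44 \<and>
    snd (run Prog 39 (4, m)) 0 = q \<and>
    snd (run Prog 39 (4, m)) 1 = 8 \<and>
    snd (run Prog 39 (4, m)) 2 = n + 2 \<and>
    snd (run Prog 39 (4, m)) 5 = 1 \<and>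
    snd (run Prog 39 (4, m)) 6 = n + 8 \<and>
    snd (run Prog 39 (4, m)) 7 = 2 * n + 8 \<and>
    snd (run Prog 39 (4, m)) (q - 7) = q - 6 \<and>
    snd (run Prog 39 (4, m)) (q - 8) = k \<and>
    snd (run Prog 39 (4, m)) (q - 1) = m 2 \<and>
    snd (run Prog 39 (4, m)) (q - 2) = m 3 \<and>
    snd (run Prog 39 (4, m)) (q - 3) = m 4 \<and>
    snd (run Prog 39 (4, m)) (q - 4) = m 5 \<and>
    snd (run Prog 39 (4, m)) (q - 5) = m 6 \<and>
    snd (run Prog 39 (4, m)) (q - 6) = m 7 \<and>
    (\<forall>a. 8 \<le> a \<longrightarrow> snd (run Prog 39 (4, m)) a = m a)"
  using assms by (simp add: run_numeral run_Suc st_all)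

lemma setupB2:
  fixes m :: "int \<Rightarrow> int" and q n k :: int
  assumes "m 0 = q" "q = -2*n - k" "m q = n + k" "0 \<le> n" "1 \<le> k" "n < 6"
  shows "fst (run Prog 40 (4, m)) = 44 \<and>
    snd (run Prog 40 (4, m)) 0 = q \<and>
    snd (run Prog 40 (4, m)) 1 = 8 \<and>
    snd (run Prog 40 (4, m)) 2 = n + 2 \<and>
    snd (run Prog 40 (4, m)) 5 = 1 \<and>
    snd (run Prog 40 (4, m)) 6 = n + 8 \<and>
    snd (run Prog 40 (4, m)) 7 = 2 * n + 8 \<and>
    snd (run Prog 40 (4, m)) (q - 7) = q - n \<and>
    snd (run Prog 40 (4, m)) (q - 8) = k \<and>
    snd (run Prog 40 (4, m)) (q - 1) = m 2 \<and>
    snd (run Prog 40 (4, m)) (q - 2) = m 3 \<and>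
    snd (run Prog 40 (4, m)) (q - 3) = m 4 \<and>
    snd (run Prog 40 (4, m)) (q - 4) = m 5 \<and>
    snd (run Prog 40 (4, m)) (q - 5) = m 6 \<and>
    snd (run Prog 40 (4, m)) (q - 6) = m 7 \<and>
    (\<forall>a. 8 \<le> a \<longrightarrow> snd (run Prog 40 (4, m)) a = m a)"
  using assms by (simp add: run_numeral run_Suc st_all)


lemma st1s: "step Prog (Suc 0, m) = (2, m(0 := m 0 - m 1))" using st1 by simp

lemma setupA0:
  fixes m :: "int \<Rightarrow> int" and N K :: int
  assumes "m 0 = K" "m 1 = N"
  shows "run Prog 4 (0, m) = (4, m(1 := N + K, 0 := K - (N+K) - (N+K), K - (N+K) - (N+K) := N + K))"
  using assms by (simp add: run_numeral run_Suc st1s st_all)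

lemma setupA:
  fixes m :: "int \<Rightarrow> int" and N K :: int
  assumes "m 0 = K" "m 1 = N" "1 \<le> K" "0 \<le> N"
  shows "fst (run Prog 4 (0, m)) = 4 \<and> snd (run Prog 4 (0, m)) 0 = -2*N - K \<and>
    snd (run Prog 4 (0, m)) (-2*N - K) = N + K \<and> (\<forall>a. 2 \<le> a \<longrightarrow> snd (run Prog 4 (0, m)) a = m a)"
proof -
  have e: "K - (N+K) - (N+K) = -2*N - K" by simp
  show ?thesis unfolding setupA0[OF assms(1,2)] e using assms by auto
qed

lemma setupB:
  fixes m :: "int \<Rightarrow> int" and q n k :: int
  assumes "m 0 = q" "q = -2*n - k" "m q = n + k" "0 \<le> n" "1 \<le> k"
  shows "\<exists>t m'. t \<le> 40 \<and> run Prog t (4, m) = (44, m') \<and> m' 0 = q \<and> m' 1 = 8 \<and> m' 2 = n + 2 \<and>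
    m' 5 = 1 \<and> m' 6 = n + 8 \<and> m' 7 = 2 * n + 8 \<and> m' (q - 7) = q - min n 6 \<and> m' (q - 8) = k \<and>
    (\<forall>j\<in>{0..5}. m' (q - 1 - j) = m (j + 2)) \<and> (\<forall>a. 8 \<le> a \<longrightarrow> m' a = m a)"
proof (cases "6 \<le> n")
  case True
  note S = setupB1[OF assms True]
  have e: "{0..5::int} = {0,1,2,3,4,5}" by auto
  show ?thesis
    apply (rule exI[of _ 39], rule exI[of _ "snd (run Prog 39 (4, m))"])
    using S True unfolding e by (simp add: prod_eq_iff)
next
  case False
  note S = setupB2[OF assms] 
  have e: "{0..5::int} = {0,1,2,3,4,5}" by auto
  show ?thesis
    apply (rule exI[of _ 40], rule exI[of _ "snd (run Prog 40 (4, m))"])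
    using S False unfolding e by (simp add: prod_eq_iff)
qed

lemma dispatch1:
  fixes m :: "int \<Rightarrow> int"
  assumes "m 2 = h" "2 \<le> h" "m 5 = 1" "m 0 = q" "q \<le> -1" "m (q - 7) = lo"
  shows "fst (run Prog 7 (53, m)) = 44 \<and> snd (run Prog 7 (53, m)) 1 = lo \<and> snd (run Prog 7 (53, m)) 2 = q \<and>
    (\<forall>a. a \<notin> {1,2,3} \<longrightarrow> snd (run Prog 7 (53, m)) a = m a)"
  using assms by (simp add: run_numeral run_Suc st_all)

lemma dispatch2:
  fixes m :: "int \<Rightarrow> int"
  assumes "m 2 = q" "q \<le> -1" "m 5 = 1" "m 0 = q" "m (q - 8) = K" "m 6 = B" "8 \<le> B"
  shows "\<exists>t \<le> 8. if m B = 1 then (fst (run Prog t (53, m)) = 69 \<and> snd (run Prog t (53, m)) 1 = B + 1 \<and>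
     snd (run Prog t (53, m)) 2 = K \<and> snd (run Prog t (53, m)) 5 = 1 \<and>
     (\<forall>a. 8 \<le> a \<longrightarrow> snd (run Prog t (53, m)) a = m a) \<and> snd (run Prog t (53, m)) 7 = m 7)
    else fst (run Prog t (53, m)) = 80"
proof (cases "m B = 1")
  case True
  show ?thesis apply (rule exI[of _ 8]) using assms True by (simp add: run_numeral run_Suc st_all)
next
  case False
  show ?thesis
  proof (cases "m B \<le> 1")
    case True
    show ?thesis apply (rule exI[of _ 8]) using assms True False by (simp add: run_numeral run_Suc st_all)
  next
    case F2: False
    show ?thesis apply (rule exI[of _ 7]) using assms F2 False by (simp add: run_numeral run_Suc st_all)
  qed
qed

lemma fin_rej: "run Prog 1 (80, m) = (81, m(0 := 0))"
  by (simp add: run_Suc st_all)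

lemma fin_acc: "run Prog 2 (78, m) = (81, m(0 := 1))"
  by (simp add: run_numeral run_Suc st_all)



lemma count_card: "count (mset xs) x = card {j. j < length xs \<and> xs ! j = x}"
  by (simp add: count_mset count_list_eq_length_filter length_filter_conv_card eq_commute)

lemma count_regions:
  fixes ds :: "nat list" and q d :: int
  assumes "0 \<le> d"
  shows "card {i\<in>{8..<int (length ds)+2}. int (ds ! nat (i-2)) = d}
       + card {i \<in> {q - min (int (length ds)) 6..<q}. int (ds ! nat (q-1-i)) = d}
       = count (mset ds) (nat d)"
proof -
  define n where "n = length ds"
  define x where "x = nat d"
  have dx: "d = int x" using assms unfolding x_def by simp
  define S1 where "S1 = {j. 6 \<le> j \<and> j < n \<and> ds ! j = x}"
  define S2 where "S2 = {j. j < min n 6 \<and> ds ! j = x}"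
  have S: "{j. j < n \<and> ds ! j = x} = S1 \<union> S2" unfolding S1_def S2_def by auto
  have fin: "finite S1" "finite S2" unfolding S1_def S2_def by auto
  have dis: "S1 \<inter> S2 = {}" unfolding S1_def S2_def by auto
  have R1: "{i\<in>{8..<int n+2}. int (ds ! nat (i-2)) = d} = (\<lambda>j. int j + 2) ` S1"
  proof (intro set_eqI iffI)
    fix i assume "i \<in> {i\<in>{8..<int n+2}. int (ds ! nat (i-2)) = d}"
    then have i: "8 \<le> i" "i < int n + 2" "ds ! nat (i-2) = x" using dx by auto
    then have "nat (i - 2) \<in> S1" unfolding S1_def by auto
    moreover have "i = int (nat (i-2)) + 2" using i by simp
    ultimately show "i \<in> (\<lambda>j. int j + 2) ` S1" by blast
  next
    fix i assume "i \<in> (\<lambda>j. int j + 2) ` S1"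
    then obtain j where j: "j \<in> S1" "i = int j + 2" by blast
    then show "i \<in> {i\<in>{8..<int n+2}. int (ds ! nat (i-2)) = d}" using dx unfolding S1_def by auto
  qed
  have R2: "{i \<in> {q - min (int n) 6..<q}. int (ds ! nat (q-1-i)) = d} = (\<lambda>j. q - 1 - int j) ` S2"
  proof (intro set_eqI iffI)
    fix i assume "i \<in> {i \<in> {q - min (int n) 6..<q}. int (ds ! nat (q-1-i)) = d}"
    then have i: "q - min (int n) 6 \<le> i" "i < q" "ds ! nat (q-1-i) = x" using dx by auto
    then have "nat (q-1-i) \<in> S2" unfolding S2_def by auto
    moreover have "i = q - 1 - int (nat (q-1-i))" using i by simp
    ultimately show "i \<in> (\<lambda>j. q - 1 - int j) ` S2" by blast
  next
    fix i assume "i \<in> (\<lambda>j. q - 1 - int j) ` S2"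
    then obtain j where j: "j \<in> S2" "i = q - 1 - int j" by blast
    then show "i \<in> {i \<in> {q - min (int n) 6..<q}. int (ds ! nat (q-1-i)) = d}" using dx unfolding S2_def by auto
  qed
  have c1: "card ((\<lambda>j. int j + 2) ` S1) = card S1" by (rule card_image) (auto simp: inj_on_def)
  have c2: "card ((\<lambda>j. q - 1 - int j) ` S2) = card S2" by (rule card_image) (auto simp: inj_on_def)
  have "count (mset ds) (nat d) = card (S1 \<union> S2)" unfolding count_card S[symmetric] n_def x_def by simp
  also have "\<dots> = card S1 + card S2" using fin dis by (rule card_Un_disjoint)
  finally show ?thesis using R1 R2 c1 c2 unfolding n_def by simp
qed

lemma all_less:
  fixes ds :: "nat list" and q :: int
  shows "((\<forall>a\<in>{8..<int (length ds)+2}. int (ds ! nat (a-2)) < int (length ds)) \<and>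
       (\<forall>a\<in>{q - min (int (length ds)) 6..<q}. int (ds ! nat (q-1-a)) < int (length ds)))
    \<longleftrightarrow> (\<forall>x\<in>set ds. x < length ds)"
proof
  assume h: "(\<forall>a\<in>{8..<int (length ds)+2}. int (ds ! nat (a-2)) < int (length ds)) \<and>
       (\<forall>a\<in>{q - min (int (length ds)) 6..<q}. int (ds ! nat (q-1-a)) < int (length ds))"
  show "\<forall>x\<in>set ds. x < length ds"
  proof
    fix x assume "x \<in> set ds"
    then obtain j where j: "j < length ds" "ds ! j = x" by (auto simp: in_set_conv_nth)
    show "x < length ds"
    proof (cases "6 \<le> j")
      case True
      then have "int j + 2 \<in> {8..<int (length ds)+2}" using j by auto
      then have "int (ds ! nat (int j + 2 - 2)) < int (length ds)" using h by blast
      then show ?thesis using j by simp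
    next
      case False
      then have "q - 1 - int j \<in> {q - min (int (length ds)) 6..<q}" using j by auto
      then have "int (ds ! nat (q - 1 - (q - 1 - int j))) < int (length ds)" using h by blast
      then show ?thesis using j by simp
    qed
  qed
next
  assume h: "\<forall>x\<in>set ds. x < length ds"
  show "(\<forall>a\<in>{8..<int (length ds)+2}. int (ds ! nat (a-2)) < int (length ds)) \<and>
       (\<forall>a\<in>{q - min (int (length ds)) 6..<q}. int (ds ! nat (q-1-a)) < int (length ds))"
  proof (intro conjI ballI)
    fix a assume "a \<in> {8..<int (length ds)+2}"
    then have "nat (a - 2) < length ds" by auto
    then show "int (ds ! nat (a-2)) < int (length ds)" using h by auto
  next
    fix a assume "a \<in> {q - min (int (length ds)) 6..<q}"
    then have "nat (q - 1 - a) < length ds" by auto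
    then show "int (ds ! nat (q-1-a)) < int (length ds)" using h by auto
  qed
qed


lemma rej_fin: "fst (run Prog t c) = 80 \<Longrightarrow> run Prog (t + 1) c = (81, (snd (run Prog t c))(0 := 0))"
  by (metis run_add fin_rej prod.collapse)

lemma acc_fin: "fst (run Prog t c) = 78 \<Longrightarrow> run Prog (t + 2) c = (81, (snd (run Prog t c))(0 := 1))"
  by (metis run_add fin_acc prod.collapse)

definition acc :: "nat \<Rightarrow> nat list \<Rightarrow> bool" where
  "acc k ds \<longleftrightarrow> (\<forall>x\<in>set ds. x < length ds) \<and> count (mset ds) 0 = 1 \<and>
     (\<forall>d. Suc d < length ds \<longrightarrow> count (mset ds) (Suc d) \<le> count (mset ds) d * k)"

lemma main_run:
  assumes k1: "1 \<le> k"
  shows "\<exists>t m. t \<le> 20 * length ds + 200 \<and> run Prog t (init k ds) = (81, m) \<and> m 0 = (if acc k ds then 1 else 0)"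
proof -
  define n where "n = length ds"
  define N where "N = int n"
  define K where "K = int k"
  define q where "q = -2*N - K"
  define mm where "mm = min N 6"
  define B where "B = N + 8"
  define mI where "mI = snd (init k ds)"
  have N0: "0 \<le> N" and K1: "1 \<le> K" and qn: "q \<le> -1" using k1 unfolding N_def K_def q_def by auto
  have I: "init k ds = (0, mI)" by (simp add: init_def mI_def)
  have mI0: "mI 0 = K" and mI1: "mI 1 = N" by (simp_all add: mI_def init_def K_def N_def n_def)
  have mIr: "mI a = int (ds ! nat (a - 2))" if "2 \<le> a" "a < N + 2" for a
    using that by (simp add: mI_def init_def N_def n_def)
  have mIz: "mI a = 0" if "N + 2 \<le> a" for a
    using that by (simp add: mI_def init_def N_def n_def)
  define m1 where "m1 = snd (run Prog 4 (0, mI))"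
  note A = setupA[OF mI0 mI1 K1 N0]
  have RA: "run Prog 4 (init k ds) = (4, m1)" using A I unfolding m1_def by (metis prod.collapse)
  have m1q0: "m1 0 = q" and m1q: "m1 q = N + K" and m1r: "\<And>a. 2 \<le> a \<Longrightarrow> m1 a = mI a"
    using A unfolding m1_def q_def by auto
  obtain t2 m2 where t2: "t2 \<le> 40" and RB: "run Prog t2 (4, m1) = (44, m2)" and
    m2f: "m2 0 = q" "m2 1 = 8" "m2 2 = N + 2" "m2 5 = 1" "m2 6 = N + 8" "m2 7 = 2 * N + 8"
      "m2 (q - 7) = q - mm" "m2 (q - 8) = K" and
    m2s: "\<forall>j\<in>{0..5}. m2 (q - 1 - j) = m1 (j + 2)" and m2r: "\<forall>a. 8 \<le> a \<longrightarrow> m2 a = m1 a"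
    using setupB[OF m1q0 q_def m1q N0 K1] unfolding mm_def by blast
  have RAB: "run Prog (4 + t2) (init k ds) = (44, m2)" by (simp add: run_add RA RB)
  have m2I: "m2 a = mI a" if "8 \<le> a" for a using that m2r m1r by simp
  have m2v: "m2 a = int (ds ! nat (a - 2))" if "a \<in> {8..<N+2}" for a using that m2I mIr by simp
  have m2z: "m2 a = 0" if "N + 8 \<le> a" for a using that m2I mIz N0 by simp
  have m2w: "m2 a = int (ds ! nat (q - 1 - a))" if "a \<in> {q - mm..<q}" for a
  proof -
    define j where "j = q - 1 - a"
    have j: "j \<in> {0..5}" "j < N" using that unfolding j_def mm_def by auto
    have "a = q - 1 - j" unfolding j_def by simp
    then have "m2 a = m1 (j + 2)" using m2s j by simp
    also have "\<dots> = mI (j + 2)" using j m1r by simp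
    also have "\<dots> = int (ds ! nat j)" using j mIr by simp
    finally show ?thesis unfolding j_def .
  qed
  have "\<exists>t \<le> 9 * nat (N + 2 - 8) + 1. if (\<forall>a\<in>{8..<N+2}. m2 a < N) then
      (fst (run Prog t (44,m2)) = 53
       \<and> (\<forall>a. a \<notin> {1,3,4} \<longrightarrow> \<not>(B \<le> a \<and> a < B+N) \<longrightarrow> snd (run Prog t (44,m2)) a = m2 a)
       \<and> (\<forall>a. B \<le> a \<and> a < B+N \<longrightarrow> snd (run Prog t (44,m2)) a = m2 a + int (card {i\<in>{8..<N+2}. m2 i = a - B})))
    else fst (run Prog t (44, m2)) = 80"
    by (rule loopC_aux[OF refl]) (use m2f N0 m2v in \<open>auto simp: B_def\<close>)
  then obtain t3 where t3: "t3 \<le> 9 * nat (N + 2 - 8) + 1" and C: "if (\<forall>a\<in>{8..<N+2}. m2 a < N) then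
      (fst (run Prog t3 (44,m2)) = 53
       \<and> (\<forall>a. a \<notin> {1,3,4} \<longrightarrow> \<not>(B \<le> a \<and> a < B+N) \<longrightarrow> snd (run Prog t3 (44,m2)) a = m2 a)
       \<and> (\<forall>a. B \<le> a \<and> a < B+N \<longrightarrow> snd (run Prog t3 (44,m2)) a = m2 a + int (card {i\<in>{8..<N+2}. m2 i = a - B})))
    else fst (run Prog t3 (44, m2)) = 80" by blast
  have c1eq: "(\<forall>a\<in>{8..<N+2}. m2 a < N) \<longleftrightarrow> (\<forall>a\<in>{8..<int (length ds)+2}. int (ds ! nat (a-2)) < int (length ds))"
    using m2v unfolding N_def n_def by auto
  have allq: "(\<forall>a\<in>{8..<int (length ds)+2}. int (ds ! nat (a-2)) < int (length ds)) \<and>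
       (\<forall>a\<in>{q - min (int (length ds)) 6..<q}. int (ds ! nat (q-1-a)) < int (length ds))
    \<longleftrightarrow> (\<forall>x\<in>set ds. x < length ds)" by (rule all_less)
  show ?thesis
  proof (cases "\<forall>a\<in>{8..<N+2}. m2 a < N")
    case False
    then have na: "\<not> acc k ds" using c1eq allq unfolding acc_def by blast
    have f: "fst (run Prog t3 (44, m2)) = 80" using C False by simp
    have R: "run Prog (4 + t2 + (t3 + 1)) (init k ds) = (81, (snd (run Prog t3 (44, m2)))(0 := 0))"
      using rej_fin[OF f] run_add[of Prog "4 + t2" "t3 + 1" "init k ds"] RAB by simp
    have tb2: "4 + t2 + (t3 + 1) \<le> 20 * length ds + 200" using t2 t3 unfolding N_def n_def by simp
    show ?thesis using na R tb2
      by (intro exI[of _ "4 + t2 + (t3 + 1)"] exI[of _ "(snd (run Prog t3 (44, m2)))(0 := 0)"]) simp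
  next
    case c1: True
    define m3 where "m3 = snd (run Prog t3 (44, m2))"
    have RC: "run Prog t3 (44, m2) = (53, m3)" using C c1 unfolding m3_def by (metis prod.collapse)
    have m3a: "m3 a = m2 a" if "a \<notin> {1,3,4}" "\<not>(B \<le> a \<and> a < B+N)" for a using C c1 that unfolding m3_def by auto
    have m3b: "m3 a = m2 a + int (card {i\<in>{8..<N+2}. m2 i = a - B})" if "B \<le> a" "a < B+N" for a
      using C c1 that unfolding m3_def by auto
    have m3n: "m3 a = m2 a" if "a < 8" "a \<notin> {1,3,4}" for a
      using m3a[OF that(2)] that(1) N0 unfolding B_def by simp
    have qa: "q - 7 < 8" "q - 8 < 8" "q - 7 \<notin> {1,3,4}" "q - 8 \<notin> {1,3,4}"
      "q - 8 \<notin> {1,2,3}" "q - 7 \<notin> {1,2,3}" using qn by auto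
    have m3f: "m3 2 = N + 2" "m3 5 = 1" "m3 0 = q" "m3 (q - 7) = q - mm" "m3 6 = B" "m3 7 = B + N" "m3 (q - 8) = K"
      using m3n[OF qa(1) qa(3)] m3n[OF qa(2) qa(4)] by (simp_all add: m3n m2f B_def)
    have N2: "2 \<le> N + 2" using N0 by simp
    note D = dispatch1[OF m3f(1) N2 m3f(2) m3f(3) qn m3f(4)]
    define m4 where "m4 = snd (run Prog 7 (53, m3))"
    have RD: "run Prog 7 (53, m3) = (44, m4)" using D unfolding m4_def by (metis prod.collapse)
    have m4a: "\<And>a. a \<notin> {1,2,3} \<Longrightarrow> m4 a = m3 a" using D unfolding m4_def by blast
    have m4f: "m4 1 = q - mm" "m4 2 = q" "m4 5 = 1" "m4 6 = B" "m4 7 = B + N" "m4 0 = q" "m4 (q - 8) = K"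
      using D m4a[OF qa(5)] m3f unfolding m4_def by simp_all
    have m4w: "m4 a = int (ds ! nat (q - 1 - a))" if "a \<in> {q - mm..<q}" for a
    proof -
      have a0: "a < 0" using that qn by auto
      then have "a \<notin> {1,2,3}" "a < 8" "a \<notin> {1,3,4}" by auto
      then have "m4 a = m2 a" using m4a m3n by simp
      then show ?thesis using m2w that by simp
    qed
    have "\<exists>t \<le> 9 * nat (q - (q - mm)) + 1. if (\<forall>a\<in>{q - mm..<q}. m4 a < N) then
      (fst (run Prog t (44,m4)) = 53
       \<and> (\<forall>a. a \<notin> {1,3,4} \<longrightarrow> \<not>(B \<le> a \<and> a < B+N) \<longrightarrow> snd (run Prog t (44,m4)) a = m4 a)
       \<and> (\<forall>a. B \<le> a \<and> a < B+N \<longrightarrow> snd (run Prog t (44,m4)) a = m4 a + int (card {i\<in>{q - mm..<q}. m4 i = a - B})))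
    else fst (run Prog t (44, m4)) = 80"
      by (rule loopC_aux[OF refl]) (use m4f N0 m4w qn in \<open>auto simp: B_def\<close>)
    then obtain t5 where t5: "t5 \<le> 9 * nat (q - (q - mm)) + 1" and E: "if (\<forall>a\<in>{q - mm..<q}. m4 a < N) then
      (fst (run Prog t5 (44,m4)) = 53
       \<and> (\<forall>a. a \<notin> {1,3,4} \<longrightarrow> \<not>(B \<le> a \<and> a < B+N) \<longrightarrow> snd (run Prog t5 (44,m4)) a = m4 a)
       \<and> (\<forall>a. B \<le> a \<and> a < B+N \<longrightarrow> snd (run Prog t5 (44,m4)) a = m4 a + int (card {i\<in>{q - mm..<q}. m4 i = a - B})))
    else fst (run Prog t5 (44, m4)) = 80" by blast
    have t5b: "t5 \<le> 55" using t5 unfolding mm_def by simp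
    have c2eq: "(\<forall>a\<in>{q - mm..<q}. m4 a < N) \<longleftrightarrow> (\<forall>a\<in>{q - min (int (length ds)) 6..<q}. int (ds ! nat (q-1-a)) < int (length ds))"
      using m4w unfolding N_def n_def mm_def by auto
    have P44: "run Prog (4 + t2 + t3 + 7) (init k ds) = (44, m4)"
      using run_add[of Prog "4 + t2 + t3" 7 "init k ds"] run_add[of Prog "4 + t2" t3 "init k ds"] RAB RC RD by simp
    show ?thesis
    proof (cases "\<forall>a\<in>{q - mm..<q}. m4 a < N")
      case False
      then have na: "\<not> acc k ds" using c2eq allq unfolding acc_def by blast
      have f: "fst (run Prog t5 (44, m4)) = 80" using E False by simp
      have R: "run Prog (4 + t2 + t3 + 7 + (t5 + 1)) (init k ds) = (81, (snd (run Prog t5 (44, m4)))(0 := 0))"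
        using rej_fin[OF f] run_add[of Prog "4 + t2 + t3 + 7" "t5 + 1" "init k ds"] P44 by simp
      have tb2: "4 + t2 + t3 + 7 + (t5 + 1) \<le> 20 * length ds + 200" using t2 t3 t5b unfolding N_def n_def by simp
      show ?thesis using na R tb2
        by (intro exI[of _ "4 + t2 + t3 + 7 + (t5 + 1)"] exI[of _ "(snd (run Prog t5 (44, m4)))(0 := 0)"]) simp
    next
      case c2: True
      have allds: "\<forall>x\<in>set ds. x < length ds" using c1 c2 c1eq c2eq allq by blast
      define m5 where "m5 = snd (run Prog t5 (44, m4))"
      have RE: "run Prog t5 (44, m4) = (53, m5)" using E c2 unfolding m5_def by (metis prod.collapse)
      have m5a: "m5 a = m4 a" if "a \<notin> {1,3,4}" "\<not>(B \<le> a \<and> a < B+N)" for a using E c2 that unfolding m5_def by auto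
      have m5n: "m5 a = m4 a" if "a < 8" "a \<notin> {1,3,4}" for a
        using m5a[OF that(2)] that(1) N0 unfolding B_def by simp
      have m5b: "m5 a = m4 a + int (card {i\<in>{q - mm..<q}. m4 i = a - B})" if "B \<le> a" "a < B+N" for a
        using E c2 that unfolding m5_def by auto
      have cnt: "m5 a = int (count (mset ds) (nat (a - B)))" if "B \<le> a" "a < B + N" for a
      proof -
        have "m5 a = m3 a + int (card {i\<in>{q - mm..<q}. m4 i = a - B})"
          using m5b[OF that] m4a[of a] that N0 unfolding B_def by simp
        also have "m3 a = m2 a + int (card {i\<in>{8..<N+2}. m2 i = a - B})" using m3b that by simp
        also have "m2 a = 0" using m2z that unfolding B_def by simp
        also have "{i\<in>{8..<N+2}. m2 i = a - B} = {i\<in>{8..<int (length ds)+2}. int (ds ! nat (i-2)) = a - B}"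
          using m2v unfolding N_def n_def by auto
        also have "{i\<in>{q - mm..<q}. m4 i = a - B} = {i\<in>{q - min (int (length ds)) 6..<q}. int (ds ! nat (q-1-i)) = a - B}"
          using m4w unfolding N_def n_def mm_def by auto
        finally show ?thesis using count_regions[of "a - B" ds q] that by simp
      qed
      have cntB: "m5 B = int (count (mset ds) 0)"
      proof (cases "N = 0")
        case True
        then have "ds = []" unfolding N_def n_def by simp
        moreover have "m5 B = 0"
        proof -
          have "m5 B = m4 B" using m5a[of B] True unfolding B_def by simp
          also have "\<dots> = m3 B" using m4a[of B] unfolding B_def True by simp
          also have "\<dots> = m2 B" using m3a[of B] unfolding B_def True by simp
          also have "\<dots> = 0" using m2z[of B] unfolding B_def True by simp
          finally show ?thesis .
        qed
        ultimately show ?thesis by simp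
      next
        case False
        then show ?thesis using cnt[of B] N0 by simp
      qed
      have m5f: "m5 2 = q" "m5 5 = 1" "m5 0 = q" "m5 (q - 8) = K" "m5 6 = B" "m5 7 = B + N"
        using m5n[OF qa(2) qa(4)] m4f by (simp_all add: m5n)
      have "\<exists>t \<le> 8. if m5 B = 1 then (fst (run Prog t (53, m5)) = 69 \<and> snd (run Prog t (53, m5)) 1 = B + 1 \<and>
         snd (run Prog t (53, m5)) 2 = K \<and> snd (run Prog t (53, m5)) 5 = 1 \<and>
         (\<forall>a. 8 \<le> a \<longrightarrow> snd (run Prog t (53, m5)) a = m5 a) \<and> snd (run Prog t (53, m5)) 7 = m5 7)
        else fst (run Prog t (53, m5)) = 80"
        by (rule dispatch2[OF m5f(1) qn m5f(2) m5f(3) m5f(4) m5f(5)]) (simp add: B_def N0)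
      then obtain t6 where t6: "t6 \<le> 8" and F: "if m5 B = 1 then (fst (run Prog t6 (53, m5)) = 69 \<and> snd (run Prog t6 (53, m5)) 1 = B + 1 \<and>
         snd (run Prog t6 (53, m5)) 2 = K \<and> snd (run Prog t6 (53, m5)) 5 = 1 \<and>
         (\<forall>a. 8 \<le> a \<longrightarrow> snd (run Prog t6 (53, m5)) a = m5 a) \<and> snd (run Prog t6 (53, m5)) 7 = m5 7)
        else fst (run Prog t6 (53, m5)) = 80" by blast
      have P53: "run Prog (4 + t2 + t3 + 7 + t5) (init k ds) = (53, m5)"
        using run_add[of Prog "4 + t2 + t3 + 7" t5 "init k ds"] P44 RE by simp
      show ?thesis
      proof (cases "m5 B = 1")
        case False
        then have na: "\<not> acc k ds" using cntB unfolding acc_def by simp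
        have f: "fst (run Prog t6 (53, m5)) = 80" using F False by simp
        have R: "run Prog (4 + t2 + t3 + 7 + t5 + (t6 + 1)) (init k ds) = (81, (snd (run Prog t6 (53, m5)))(0 := 0))"
          using rej_fin[OF f] run_add[of Prog "4 + t2 + t3 + 7 + t5" "t6 + 1" "init k ds"] P53 by simp
        have tb2: "4 + t2 + t3 + 7 + t5 + (t6 + 1) \<le> 20 * length ds + 200" using t2 t3 t5b t6 unfolding N_def n_def by simp
        show ?thesis using na R tb2
          by (intro exI[of _ "4 + t2 + t3 + 7 + t5 + (t6 + 1)"] exI[of _ "(snd (run Prog t6 (53, m5)))(0 := 0)"]) simp
      next
        case c3: True
        define m6 where "m6 = snd (run Prog t6 (53, m5))"
        have RF: "run Prog t6 (53, m5) = (69, m6)" using F c3 unfolding m6_def by (metis prod.collapse)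
        have m6f: "m6 1 = B + 1" "m6 7 = B + N" "m6 5 = 1" "m6 2 = K" and m6r: "\<And>a. 8 \<le> a \<Longrightarrow> m6 a = m5 a"
          using F c3 m5f unfolding m6_def by auto
        have "\<exists>t \<le> 9 * nat (B + N - (B + 1)) + 1. fst (run Prog t (69,m6)) = (if \<forall>a\<in>{B+1..<B+N}. m6 a \<le> m6 (a-1) * K then 78 else 80)"
          by (rule loop2_aux[OF refl m6f]) (auto simp: B_def N0)
        then obtain t7 where t7: "t7 \<le> 9 * nat (B + N - (B + 1)) + 1" and
          G: "fst (run Prog t7 (69,m6)) = (if \<forall>a\<in>{B+1..<B+N}. m6 a \<le> m6 (a-1) * K then 78 else 80)" by blast
        have P69: "run Prog (4 + t2 + t3 + 7 + t5 + t6) (init k ds) = (69, m6)"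
          using run_add[of Prog "4 + t2 + t3 + 7 + t5" t6 "init k ds"] P53 RF by simp
        have tb: "4 + t2 + t3 + 7 + t5 + t6 + t7 + 2 \<le> 20 * length ds + 200"
          using t2 t3 t5b t6 t7 unfolding N_def n_def B_def by simp
        have cval: "m6 a = int (count (mset ds) (nat (a - B)))" if "a \<in> {B..<B+N}" for a
        proof -
          have "8 \<le> a" using that unfolding B_def using N0 by auto
          then have "m6 a = m5 a" using m6r by simp
          then show ?thesis using cnt that by simp
        qed
        have c4eq: "(\<forall>a\<in>{B+1..<B+N}. m6 a \<le> m6 (a-1) * K) \<longleftrightarrow>
          (\<forall>d. Suc d < length ds \<longrightarrow> count (mset ds) (Suc d) \<le> count (mset ds) d * k)"
        proof
          assume h: "\<forall>a\<in>{B+1..<B+N}. m6 a \<le> m6 (a-1) * K"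
          show "\<forall>d. Suc d < length ds \<longrightarrow> count (mset ds) (Suc d) \<le> count (mset ds) d * k"
          proof (intro allI impI)
            fix d assume d: "Suc d < length ds"
            define a where "a = B + int (Suc d)"
            have a: "a \<in> {B+1..<B+N}" using d unfolding a_def N_def n_def by auto
            have "a \<in> {B..<B+N}" "a - 1 \<in> {B..<B+N}" using a by auto
            moreover have "nat (a - B) = Suc d" "nat (a - 1 - B) = d" unfolding a_def by simp_all
            ultimately have "m6 a = int (count (mset ds) (Suc d))" "m6 (a - 1) = int (count (mset ds) d)"
              using cval by metis+
            then show "count (mset ds) (Suc d) \<le> count (mset ds) d * k" using h a unfolding K_def
              by (metis of_nat_le_iff of_nat_mult)
          qed
        next
          assume h: "\<forall>d. Suc d < length ds \<longrightarrow> count (mset ds) (Suc d) \<le> count (mset ds) d * k"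
          show "\<forall>a\<in>{B+1..<B+N}. m6 a \<le> m6 (a-1) * K"
          proof
            fix a assume a: "a \<in> {B+1..<B+N}"
            define d where "d = nat (a - B - 1)"
            have ad: "a = B + int (Suc d)" using a unfolding d_def by auto
            have d: "Suc d < length ds" using a ad unfolding N_def n_def by auto
            have "a \<in> {B..<B+N}" "a - 1 \<in> {B..<B+N}" using a by auto
            moreover have "nat (a - B) = Suc d" "nat (a - 1 - B) = d" using ad by simp_all
            ultimately have "m6 a = int (count (mset ds) (Suc d))" "m6 (a - 1) = int (count (mset ds) d)"
              using cval by metis+
            then show "m6 a \<le> m6 (a-1) * K" using h d unfolding K_def
              by (metis of_nat_le_iff of_nat_mult)
          qed
        qed
        show ?thesis
        proof (cases "\<forall>a\<in>{B+1..<B+N}. m6 a \<le> m6 (a-1) * K")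
          case True
          then have na: "acc k ds" using allds c3 cntB c4eq unfolding acc_def by simp
          have f: "fst (run Prog t7 (69, m6)) = 78" using G True by simp
          have R: "run Prog (4 + t2 + t3 + 7 + t5 + t6 + (t7 + 2)) (init k ds) = (81, (snd (run Prog t7 (69, m6)))(0 := 1))"
            using acc_fin[OF f] run_add[of Prog "4 + t2 + t3 + 7 + t5 + t6" "t7 + 2" "init k ds"] P69 by simp
          have tb2: "4 + t2 + t3 + 7 + t5 + t6 + (t7 + 2) \<le> 20 * length ds + 200" using tb by simp
          show ?thesis using na R tb2
            by (intro exI[of _ "4 + t2 + t3 + 7 + t5 + t6 + (t7 + 2)"] exI[of _ "(snd (run Prog t7 (69, m6)))(0 := 1)"]) simp
        next
          case False
          then have na: "\<not> acc k ds" using c4eq unfolding acc_def by simp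
          have f: "fst (run Prog t7 (69, m6)) = 80" using G False by simp
          have R: "run Prog (4 + t2 + t3 + 7 + t5 + t6 + (t7 + 1)) (init k ds) = (81, (snd (run Prog t7 (69, m6)))(0 := 0))"
            using rej_fin[OF f] run_add[of Prog "4 + t2 + t3 + 7 + t5 + t6" "t7 + 1" "init k ds"] P69 by simp
          have tb2: "4 + t2 + t3 + 7 + t5 + t6 + (t7 + 1) \<le> 20 * length ds + 200" using tb by simp
          show ?thesis using na R tb2
            by (intro exI[of _ "4 + t2 + t3 + 7 + t5 + t6 + (t7 + 1)"] exI[of _ "(snd (run Prog t7 (69, m6)))(0 := 0)"]) simp
        qed
      qed
    qed
  qed
qed


lemma acc_iff: "acc k ds \<longleftrightarrow> (\<exists>T. kary k T \<and> depths T = mset ds)"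
proof -
  let ?M = "mset ds"
  have "(\<exists>T. kary k T \<and> depths T = ?M) \<longleftrightarrow> count ?M 0 = 1 \<and> (\<forall>d. count ?M (Suc d) \<le> k * count ?M d)"
    by (rule tree_char)
  moreover have "acc k ds \<longleftrightarrow> count ?M 0 = 1 \<and> (\<forall>d. count ?M (Suc d) \<le> k * count ?M d)"
  proof
    assume a: "acc k ds"
    show "count ?M 0 = 1 \<and> (\<forall>d. count ?M (Suc d) \<le> k * count ?M d)"
    proof (intro conjI allI)
      show "count ?M 0 = 1" using a unfolding acc_def by simp
      fix d
      show "count ?M (Suc d) \<le> k * count ?M d"
      proof (cases "Suc d < length ds")
        case True then show ?thesis using a unfolding acc_def by (simp add: mult.commute)
      next
        case False
        then have "Suc d \<notin> set ds" using a unfolding acc_def by auto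
        then have c0: "count ?M (Suc d) = 0" by (metis count_eq_zero_iff set_mset_mset)
        show ?thesis unfolding c0 by simp
      qed
    qed
  next
    assume b: "count ?M 0 = 1 \<and> (\<forall>d. count ?M (Suc d) \<le> k * count ?M d)"
    have "\<forall>x\<in>set ds. x < length ds"
      using cond_bound[of ?M k] b by auto
    then show "acc k ds" using b unfolding acc_def by (simp add: mult.commute)
  qed
  ultimately show ?thesis by simp
qed

theorem mainTheorem8:
  shows "\<exists>(P :: instr list) (c :: real). \<forall>(k :: nat) (ds :: nat list). k \<ge> 1 \<longrightarrow>
     (\<exists>t. real t \<le> c * (real (length ds) + 1) * log 2 (real (length ds) + 2)
          \<and> halted P (run P t (init k ds))
          \<and> snd (run P t (init k ds)) 0 \<in> {0, 1}
          \<and> (snd (run P t (init k ds)) 0 = 1 \<longleftrightarrow>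
               (\<exists>T. kary k T \<and> depths T = mset ds)))"
proof -
  have main: "\<exists>t. real t \<le> 300 * (real (length ds) + 1) * log 2 (real (length ds) + 2)
          \<and> halted Prog (run Prog t (init k ds))
          \<and> snd (run Prog t (init k ds)) 0 \<in> {0, 1}
          \<and> (snd (run Prog t (init k ds)) 0 = 1 \<longleftrightarrow>
               (\<exists>T. kary k T \<and> depths T = mset ds))" if k: "1 \<le> k" for k ds
  proof -
    obtain t m where t: "t \<le> 20 * length ds + 200" and R: "run Prog t (init k ds) = (81, m)"
      and m0: "m 0 = (if acc k ds then 1 else 0)" using main_run[OF k] by blast
    have L: "1 \<le> log 2 (real (length ds) + 2)"
      using log_le_cancel_iff[of 2 2 "real (length ds) + 2"] by simp
    have "real t \<le> 300 * (real (length ds) + 1)" using t by simp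
    also have "\<dots> \<le> 300 * (real (length ds) + 1) * log 2 (real (length ds) + 2)"
      using L by (simp add: mult_le_cancel_left1)
    finally have tb: "real t \<le> 300 * (real (length ds) + 1) * log 2 (real (length ds) + 2)" .
    show ?thesis
      apply (rule exI[of _ t])
      using tb R m0 acc_iff[of k ds] by (simp add: halted_def len_Prog)
  qed
  show ?thesis
    apply (rule exI[of _ Prog], rule exI[of _ "300::real"])
    using main by blast
qed

end
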